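(* Let $g\in\mathbb{C}[\alpha,x^{\pm}]^s$ and $\mathcal{A}\subseteq\mathbb{C}^\ell$. Suppose that for some $\alpha^*\in\mathcal{A}$ the system $g_{\alpha^*}(x)=0$ has a nondegenerate solution in $(\mathbb{C}^* )^n$. Then (i) $\mathcal{D}_{g,\mathcal{A}}$ has nonempty Euclidean interior in $\mathcal{A}$; (ii) if in addition $\mathcal{A}$ is locally Zariski dense in $\mathbb{C}^\ell$, then $\mathcal{D}_{g,\mathcal{A}}$ is Zariski dense in $\mathbb{C}^\ell$.
   Context: Let $g\in\mathbb{C}[\alpha_1,\dots,\alpha_\ell,x_1^{\pm1},\dots,x_n^{\pm1}]^s$, $g_\alpha=g(\alpha,\cdot)$, $\mathbb{V}_{\mathbb{C}^*}(g_\alpha)=\{x\in(\mathbb{C}^* )^n: g_\alpha(x)=0\}$, and $\mathcal{D}_{g,\mathcal{A}}=\{\alpha\in\mathcal{A}:\mathbb{V}_{\mathbb{C}^*}(g_\alpha)\neq\emptyset\}$. A solution $x^*$ of a system $h(x)=0$ with $h\in\mathbb{C}[x^{\pm}]^s$ is nondegenerate if the Jacobian matrix $J_h(x^* )$ (with respect to $x$) has rank $s$. A set $X\subseteq\mathbb{C}^m$ is locally Zariski dense if for every Euclidean open $U\subseteq\mathbb{C}^m$ with $U\cap X\neq\emptyset$, the Zariski closure of $U\cap X$ is $\mathbb{C}^m$. *)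

theory Defs
  imports "HOL-Analysis.Analysis"
begin

text \<open>Elements of C[alpha_1..alpha_l, x_1^{+-1}..x_n^{+-1}], represented by their coefficient
  function on exponent pairs (a,b), a in N^l, b in Z^n, required to have finite support.\<close>

type_synonym ('l,'n) lpoly = "((nat^'l) \<times> (int^'n)) \<Rightarrow> complex"

definition is_lpoly :: "('l::finite,'n::finite) lpoly \<Rightarrow> bool" where
  "is_lpoly c \<longleftrightarrow> finite {m. c m \<noteq> 0}"

definition lpoly_eval :: "('l::finite,'n::finite) lpoly \<Rightarrow> complex^'l \<Rightarrow> complex^'n \<Rightarrow> complex" where
  "lpoly_eval c \<alpha> x = (\<Sum>m\<in>{m. c m \<noteq> 0}. c m * (\<Prod>i\<in>UNIV. (\<alpha>$i) ^ (fst m $ i)) * (\<Prod>j\<in>UNIV. (x$j) powi (snd m $ j)))"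

definition torus :: "(complex^'n::finite) set" where
  "torus = {x. \<forall>j. x$j \<noteq> 0}"

definition Vtorus :: "('s::finite \<Rightarrow> ('l::finite,'n::finite) lpoly) \<Rightarrow> complex^'l \<Rightarrow> (complex^'n) set" where
  "Vtorus g \<alpha> = {x\<in>torus. \<forall>k. lpoly_eval (g k) \<alpha> x = 0}"

definition Dset :: "('s::finite \<Rightarrow> ('l::finite,'n::finite) lpoly) \<Rightarrow> (complex^'l) set \<Rightarrow> (complex^'l) set" where
  "Dset g A = {\<alpha>\<in>A. Vtorus g \<alpha> \<noteq> {}}"

definition jacobian :: "('s::finite \<Rightarrow> ('l::finite,'n::finite) lpoly) \<Rightarrow> complex^'l \<Rightarrow> complex^'n \<Rightarrow> complex^'n^'s" where
  "jacobian g \<alpha> x = (\<chi> k j. deriv (\<lambda>t. lpoly_eval (g k) \<alpha> (\<chi> i. if i = j then t else x$i)) (x$j))"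

definition nondegenerate_solution :: "('s::finite \<Rightarrow> ('l::finite,'n::finite) lpoly) \<Rightarrow> complex^'l \<Rightarrow> complex^'n \<Rightarrow> bool" where
  "nondegenerate_solution g \<alpha> x \<longleftrightarrow> x \<in> Vtorus g \<alpha> \<and> rank (jacobian g \<alpha> x) = CARD('s)"

definition is_poly :: "(nat^'l::finite \<Rightarrow> complex) \<Rightarrow> bool" where
  "is_poly p \<longleftrightarrow> finite {a. p a \<noteq> 0}"

definition poly_eval :: "(nat^'l::finite \<Rightarrow> complex) \<Rightarrow> complex^'l \<Rightarrow> complex" where
  "poly_eval p \<alpha> = (\<Sum>a\<in>{a. p a \<noteq> 0}. p a * (\<Prod>i\<in>UNIV. (\<alpha>$i) ^ (a $ i)))"

text \<open>X is Zariski dense in C^l: its Zariski closure is C^l, i.e. the only polynomial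
  vanishing on X is the zero polynomial.\<close>
definition zariski_dense :: "(complex^'l::finite) set \<Rightarrow> bool" where
  "zariski_dense X \<longleftrightarrow> (\<forall>p. is_poly p \<and> (\<forall>\<alpha>\<in>X. poly_eval p \<alpha> = 0) \<longrightarrow> (\<forall>a. p a = 0))"

definition locally_zariski_dense :: "(complex^'l::finite) set \<Rightarrow> bool" where
  "locally_zariski_dense X \<longleftrightarrow> (\<forall>U. open U \<and> U \<inter> X \<noteq> {} \<longrightarrow> zariski_dense (U \<inter> X))"

end

theory Submission
  imports Defs
begin


lemma rank_right_inv:
  fixes J :: "complex^'n::finite^'s::finite"
  assumes "rank J = CARD('s)"
  shows "\<exists>B. J ** B = mat 1"
proof -
  let ?R = "rows J"
  have R: "?R = range (\<lambda>i. row i J)" by (auto simp: rows_def)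
  have fin: "finite ?R" by (simp add: R)
  have "vec.dim ?R \<le> card ?R" using fin vec.dim_le_card[of ?R ?R] vec.span_superset by blast
  moreover have "card ?R \<le> CARD('s)" unfolding R by (rule card_image_le) simp
  ultimately have cR: "card ?R = CARD('s)" and dR: "card ?R = vec.dim ?R"
    using assms unfolding row_rank_def_gen by auto
  have inj: "inj (\<lambda>i. row i J)"
    using cR unfolding R by (simp add: eq_card_imp_inj_on)
  have ind: "vec.independent ?R"
    using vec.card_eq_dim[of ?R ?R] dR fin vec.span_superset by blast
  show ?thesis
    unfolding matrix_right_invertible_independent_rows
  proof (intro allI impI)
    fix c :: "'s \<Rightarrow> complex" and i
    assume h: "(\<Sum>i\<in>UNIV. c i *s row i J) = 0"
    define u where "u v = c (inv (\<lambda>i. row i J) v)" for v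
    have "(\<Sum>v\<in>?R. u v *s v) = (\<Sum>i\<in>UNIV. c i *s row i J)"
      unfolding R by (subst sum.reindex[OF inj]) (simp add: u_def inv_f_f[OF inj])
    hence "(\<Sum>v\<in>?R. u v *s v) = 0" using h by simp
    hence "\<forall>v\<in>?R. u v = 0" using ind fin vec.dependent_finite by blast
    thus "c i = 0" unfolding R u_def by (auto simp: inv_f_f[OF inj])
  qed
qed


lemma differentiable_prod':
  fixes f :: "'i \<Rightarrow> 'a::real_normed_vector \<Rightarrow> 'b::real_normed_field"
  assumes "\<And>i. i \<in> I \<Longrightarrow> f i differentiable (at x)"
  shows "(\<lambda>x. \<Prod>i\<in>I. f i x) differentiable (at x)"
proof -
  from assms obtain D where "\<And>i. i \<in> I \<Longrightarrow> (f i has_derivative D i) (at x)"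
    unfolding differentiable_def by metis
  then show ?thesis using has_derivative_prod unfolding differentiable_def by blast
qed

lemma bl_fst_nth: "bounded_linear (\<lambda>p::('a::real_normed_vector^'m::finite) \<times> 'c::real_normed_vector. fst p $ i)"
  using bounded_linear_compose[OF bounded_linear_vec_nth[of i] bounded_linear_fst] by (simp add: o_def)
lemma bl_snd_nth: "bounded_linear (\<lambda>p::'c::real_normed_vector \<times> ('a::real_normed_vector^'m::finite). snd p $ i)"
  using bounded_linear_compose[OF bounded_linear_vec_nth[of i] bounded_linear_snd] by (simp add: o_def)

lemma lpoly_differentiable:
  fixes c :: "('l::finite,'n::finite) lpoly"
  assumes "x \<in> torus" and "is_lpoly c"
  shows "(\<lambda>p. lpoly_eval c (fst p) (snd p)) differentiable (at (a,x))"
proof -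
  have c1: "(\<lambda>p. fst p $ i) differentiable (at (a, x))" for i :: 'l
    by (rule bounded_linear_imp_differentiable[OF bl_fst_nth])
  have c2: "(\<lambda>p. snd p $ j) differentiable (at (a, x))" for j :: 'n
    by (rule bounded_linear_imp_differentiable[OF bl_snd_nth])
  have nz: "snd (a, x) $ j \<noteq> 0" for j using assms by (simp add: torus_def)
  have t: "(\<lambda>p. c m * (\<Prod>i\<in>UNIV. (fst p $ i) ^ (fst m $ i)) * (\<Prod>j\<in>UNIV. (snd p $ j) powi (snd m $ j))) differentiable (at (a, x))" for m
    apply (intro differentiable_mult differentiable_const differentiable_prod')
     apply (rule differentiable_power[OF c1])
    apply (rule differentiable_power_int[OF c2])
    using nz by simp
  show ?thesis unfolding lpoly_eval_def
    by (rule differentiable_sum) (use t assms(2) in \<open>auto simp: is_lpoly_def\<close>)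
qed


lemma has_derivative_vec_lambda':
  fixes f :: "'k::finite \<Rightarrow> 'a::euclidean_space \<Rightarrow> 'b::real_normed_vector"
  assumes d: "\<And>k. (f k has_derivative D k) (at x)"
  shows "((\<lambda>y. \<chi> k. f k y) has_derivative (\<lambda>h. \<chi> k. D k h)) (at x)"
  unfolding has_derivative_at2
proof
  have bl: "bounded_linear (D k)" for k using d has_derivative_bounded_linear by blast
  have "linear (\<lambda>h. \<chi> k. D k h)"
    by (rule linearI) (simp_all add: vec_eq_iff linear_add linear_scale bounded_linear.linear[OF bl])
  thus "bounded_linear (\<lambda>h. \<chi> k. D k h)" by (simp add: linear_conv_bounded_linear)
  have t: "((\<lambda>y. (1 / (norm(y - x))) *\<^sub>R (f k y - (f k x + D k (y - x)))) \<longlongrightarrow> 0) (at x)" for k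
    using d[of k] unfolding has_derivative_at2 by blast
  have eq: "(\<lambda>y. (1 / (norm(y - x))) *\<^sub>R ((\<chi> k. f k y) - ((\<chi> k. f k x) + (\<chi> k. D k (y - x)))))
     = (\<lambda>y. \<chi> k. (1 / (norm(y - x))) *\<^sub>R (f k y - (f k x + D k (y - x))))"
    by (rule ext) (simp add: vec_eq_iff)
  have "((\<lambda>y. \<chi> k. (1 / (norm(y - x))) *\<^sub>R (f k y - (f k x + D k (y - x)))) \<longlongrightarrow> (\<chi> k. 0)) (at x)"
    by (rule tendsto_vec_lambda) (rule t)
  thus "((\<lambda>y. (1 / (norm(y - x))) *\<^sub>R ((\<chi> k. f k y) - ((\<chi> k. f k x) + (\<chi> k. D k (y - x))))) \<longlongrightarrow> 0) (at x)"
    unfolding eq by (simp add: zero_vec_def)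
qed

lemma partial_lemma:
  fixes c :: "('l::finite,'n::finite) lpoly"
  assumes x: "x \<in> torus" and c: "is_lpoly c"
    and D: "((\<lambda>p. lpoly_eval c (fst p) (snd p)) has_derivative D) (at (a,x))"
  shows "D (0, axis j h) = h * deriv (\<lambda>t. lpoly_eval c a (\<chi> i. if i = j then t else x$i)) (x$j)"
proof -
  define \<iota> where "\<iota> t = (a, \<chi> i. if i = j then t else x$i)" for t
  have "((\<lambda>t. \<chi> i. if i = j then t else x$i) has_derivative (\<lambda>h. \<chi> i. if i = j then h else 0)) (at (x$j))"
    by (rule has_derivative_vec_lambda', case_tac "i = j") (auto intro!: derivative_eq_intros)
  hence di: "(\<iota> has_derivative (\<lambda>h. (0, axis j h))) (at (x$j))"
    unfolding \<iota>_def axis_def by (auto intro!: derivative_eq_intros)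
  have ix: "\<iota> (x$j) = (a, x)" by (simp add: \<iota>_def vec_eq_iff)
  have d1: "((\<lambda>t. lpoly_eval c a (\<chi> i. if i = j then t else x$i)) has_derivative (\<lambda>h. D (0, axis j h))) (at (x$j))"
    using has_derivative_compose[OF di, of "\<lambda>p. lpoly_eval c (fst p) (snd p)" D] D ix
    by (simp add: \<iota>_def)
  have nz: "x $ i \<noteq> 0" for i using x by (simp add: torus_def)
  have "(\<lambda>t. lpoly_eval c a (\<chi> i. if i = j then t else x$i)) holomorphic_on {t. t \<noteq> 0}"
    unfolding lpoly_eval_def vec_lambda_beta
    apply (intro holomorphic_intros)
    apply (auto simp: nz)
    subgoal for a b ja by (cases "ja = j") (simp_all add: holomorphic_on_const holomorphic_on_id)
    done
  hence "(\<lambda>t. lpoly_eval c a (\<chi> i. if i = j then t else x$i)) field_differentiable (at (x$j))"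
    by (rule holomorphic_on_imp_differentiable_at) (auto simp: nz open_Collect_neq)
  hence "((\<lambda>t. lpoly_eval c a (\<chi> i. if i = j then t else x$i)) has_derivative
          (*) (deriv (\<lambda>t. lpoly_eval c a (\<chi> i. if i = j then t else x$i)) (x$j))) (at (x$j))"
    using DERIV_deriv_iff_field_differentiable has_field_derivative_def by blast
  from fun_cong[OF has_derivative_unique[OF d1 this], of h] show ?thesis by (simp add: mult.commute)
qed


lemma open_torus: "open (torus :: (complex^'n::finite) set)"
proof -
  have "torus = (\<Inter>j\<in>UNIV. {x::complex^'n. x$j \<noteq> 0})" by (auto simp: torus_def)
  moreover have "open {x::complex^'n. x$j \<noteq> 0}" for j
    by (rule open_Collect_neq) (auto intro!: continuous_intros)
  moreover have "open (\<Inter>j\<in>UNIV. {x::complex^'n. x$j \<noteq> 0})"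
    by (rule open_INT) (simp_all add: calculation(2))
  ultimately show ?thesis by simp
qed

lemma scaleR_matrix_vector:
  fixes B :: "complex^'m::finite^'n::finite"
  shows "B *v (r *\<^sub>R w) = r *\<^sub>R (B *v w)"
  by (simp add: vec_eq_iff matrix_vector_mult_def scaleR_sum_right mult_scaleR_right del: scaleR_conv_of_real)

lemma F_deriv:
  fixes G :: "'s::finite \<Rightarrow> (complex^'l::finite) \<times> (complex^'n::finite) \<Rightarrow> complex"
  assumes "\<And>k. (G k has_derivative D k) (at p)"
  shows "((\<lambda>p. (fst p, \<chi> k. G k p)) has_derivative (\<lambda>h. (fst h, \<chi> k. D k h))) (at p)"
  by (rule has_derivative_Pair[OF bounded_linear_imp_has_derivative[OF bounded_linear_fst] has_derivative_vec_lambda'[OF assms]])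

theorem mainTheorem6:
  fixes g :: "'s::finite \<Rightarrow> ('l::finite,'n::finite) lpoly"
    and A :: "(complex^'l) set"
  assumes "\<forall>k. is_lpoly (g k)"
    and "\<exists>\<alpha>\<in>A. \<exists>x. nondegenerate_solution g \<alpha> x"
  shows "(\<exists>U. open U \<and> U \<inter> A \<noteq> {} \<and> U \<inter> A \<subseteq> Dset g A)
         \<and> (locally_zariski_dense A \<longrightarrow> zariski_dense (Dset g A))"
proof -
  obtain \<alpha>0 x0 where a0: "\<alpha>0 \<in> A" and nd: "nondegenerate_solution g \<alpha>0 x0"
    using assms(2) by blast
  have x0: "x0 \<in> torus" and z0: "\<And>k. lpoly_eval (g k) \<alpha>0 x0 = 0"
    and rk: "rank (jacobian g \<alpha>0 x0) = CARD('s)"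
    using nd by (auto simp: nondegenerate_solution_def Vtorus_def)
  define G where "G k p = lpoly_eval (g k) (fst p) (snd p)" for k p
  have Gd: "G k differentiable (at (a, x))" if "x \<in> torus" for k a x
    unfolding G_def by (rule lpoly_differentiable[OF that]) (use assms(1) in blast)
  have "\<forall>k. \<exists>Dk. (G k has_derivative Dk) (at (\<alpha>0, x0))"
    using Gd[OF x0] unfolding differentiable_def by blast
  then obtain D where D: "\<And>k. (G k has_derivative D k) (at (\<alpha>0, x0))" by metis
  define J where "J = jacobian g \<alpha>0 x0"
  have part: "D k (0, axis j h) = h * J$k$j" for k j h
    using partial_lemma[OF x0 _ D[of k, unfolded G_def], of j h] assms(1)
    by (simp add: J_def jacobian_def)
  have bl: "bounded_linear (D k)" for k using D has_derivative_bounded_linear by blast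
  have lin: "linear (D k)" for k using bl bounded_linear.linear by blast
  have Dsplit: "D k (a, h) = D k (a, 0) + (J *v h) $ k" for k a h
  proof -
    have "(a, h) = (a, 0) + (\<Sum>j\<in>UNIV. (0, axis j (h$j)))"
    proof -
      have "(\<Sum>j\<in>UNIV. ((0::complex^'l), axis j (h$j))) = (0, \<Sum>j\<in>UNIV. axis j (h$j))"
        by (simp add: prod_eq_iff fst_sum snd_sum)
      also have "(\<Sum>j\<in>UNIV. axis j (h$j)) = h"
        using basis_expansion[of h] by (simp add: axis_def vec_eq_iff)
      finally show ?thesis by simp
    qed
    hence "D k (a, h) = D k (a, 0) + (\<Sum>j\<in>UNIV. D k (0, axis j (h$j)))"
      using linear_add[OF lin, of k "(a,0)"] linear_sum[OF lin, of k] by simp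
    thus ?thesis by (simp add: part matrix_vector_mult_def mult_ac)
  qed
  obtain B where JB: "J ** B = mat 1" using rank_right_inv rk J_def by blast
  define S where "S = (UNIV :: (complex^'l) set) \<times> (torus :: (complex^'n) set)"
  have oS: "open S" unfolding S_def by (simp add: open_Times open_torus)
  define F where "F p = (fst p, \<chi> k. G k p)" for p
  define F' where "F' h = (fst h, \<chi> k. D k h)" for h
  define g' where "g' w = (fst w, B *v (snd w - (\<chi> k. D k (fst w, 0))))" for w :: "(complex^'l) \<times> (complex^'s)"
  have Fd: "(F has_derivative F') (at (\<alpha>0, x0))"
    unfolding F_def[abs_def] F'_def[abs_def] by (rule F_deriv[OF D])
  have contF: "continuous_on S F"
  proof (rule differentiable_imp_continuous_on, unfold differentiable_on_def, intro ballI)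
    fix p assume "p \<in> S"
    then obtain a x where p: "p = (a, x)" "x \<in> torus" by (auto simp: S_def)
    have "\<forall>k. \<exists>Dk. (G k has_derivative Dk) (at p)"
      using Gd[OF p(2)] p(1) unfolding differentiable_def by blast
    then obtain Dp where "\<And>k. (G k has_derivative Dp k) (at p)" by metis
    hence "((\<lambda>p. (fst p, \<chi> k. G k p)) has_derivative (\<lambda>h. (fst h, \<chi> k. Dp k h))) (at p)"
      by (rule F_deriv)
    thus "F differentiable at p within S"
      unfolding F_def[abs_def] differentiable_def using has_derivative_at_withinI by blast
  qed
  have linD0: "D k (a + b, 0) = D k (a, 0) + D k (b, 0)" "D k (r *\<^sub>R a, 0) = r *\<^sub>R D k (a, 0)" for k a b r
    using linear_add[OF lin, of k "(a,0)" "(b,0)"] linear_scale[OF lin, of k r "(a,0)"] by auto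
  have add_in: "snd (u + v) - (\<chi> k. D k (fst (u + v), 0)) = (snd u - (\<chi> k. D k (fst u, 0))) + (snd v - (\<chi> k. D k (fst v, 0)))"
    for u v :: "(complex^'l) \<times> (complex^'s)"
    by (simp add: vec_eq_iff linD0)
  have sc_in: "snd (r *\<^sub>R u) - (\<chi> k. D k (fst (r *\<^sub>R u), 0)) = r *\<^sub>R (snd u - (\<chi> k. D k (fst u, 0)))"
    for r and u :: "(complex^'l) \<times> (complex^'s)"
    by (simp add: vec_eq_iff linD0 scaleR_right_diff_distrib)
  have "linear g'"
  proof (rule linearI)
    fix u v :: "(complex^'l) \<times> (complex^'s)" and r :: real
    show "g' (u + v) = g' u + g' v"
      unfolding g'_def add_in matrix_vector_right_distrib by simp
    show "g' (r *\<^sub>R u) = r *\<^sub>R g' u"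
      unfolding g'_def sc_in scaleR_matrix_vector by simp
  qed
  hence blg: "bounded_linear g'" by (simp add: linear_conv_bounded_linear)
  have inv: "F' \<circ> g' = id"
  proof
    fix w :: "(complex^'l) \<times> (complex^'s)"
    define r where "r = snd w - (\<chi> k. D k (fst w, 0))"
    have JBr: "J *v (B *v r) = r"
      by (simp add: matrix_vector_mul_assoc JB)
    have "D k (fst w, B *v r) = snd w $ k" for k
    proof -
      have "D k (fst w, B *v r) = D k (fst w, 0) + r $ k"
        using Dsplit[of k "fst w" "B *v r"] unfolding JBr .
      thus ?thesis by (simp add: r_def)
    qed
    hence "(\<chi> k. D k (fst w, B *v r)) = snd w" by (simp add: vec_eq_iff)
    then show "(F' \<circ> g') w = id w"
      by (simp add: F'_def g'_def r_def[symmetric])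
  qed
  have "F (\<alpha>0, x0) \<in> interior (F ` S)"
    by (rule sussmann_open_mapping[OF oS contF _ Fd blg inv order_refl])
       (use oS x0 in \<open>auto simp: interior_open S_def\<close>)
  moreover have "F (\<alpha>0, x0) = (\<alpha>0, 0)" by (simp add: F_def G_def z0 vec_eq_iff)
  ultimately have in0: "(\<alpha>0, 0) \<in> interior (F ` S)" by simp
  define U where "U = (\<lambda>\<alpha>. (\<alpha>, 0::complex^'s)) -` interior (F ` S)"
  have oU: "open U" unfolding U_def
    by (rule continuous_open_vimage) (auto intro!: continuous_intros)
  have UA: "U \<inter> A \<noteq> {}" using in0 a0 by (auto simp: U_def)
  have UD: "U \<inter> A \<subseteq> Dset g A"
  proof
    fix \<alpha> assume "\<alpha> \<in> U \<inter> A"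
    then have "(\<alpha>, 0) \<in> F ` S" "\<alpha> \<in> A" using interior_subset by (auto simp: U_def)
    then obtain a x where "x \<in> torus" "F (a, x) = (\<alpha>, 0)" by (auto simp: S_def)
    then have a: "a = \<alpha>" and z: "(\<chi> k. G k (a, x)) = 0" and xt: "x \<in> torus" by (auto simp: F_def)
    from z have "\<forall>k. lpoly_eval (g k) \<alpha> x = 0" by (simp add: vec_eq_iff G_def a)
    with xt have "x \<in> Vtorus g \<alpha>" by (simp add: Vtorus_def)
    thus "\<alpha> \<in> Dset g A" using \<open>\<alpha> \<in> A\<close> by (auto simp: Dset_def)
  qed
  show ?thesis
  proof (intro conjI impI exI[of _ U])
    assume "locally_zariski_dense A"
    hence "zariski_dense (U \<inter> A)" using oU UA by (auto simp: locally_zariski_dense_def)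
    thus "zariski_dense (Dset g A)" using UD unfolding zariski_dense_def by blast
  qed (use oU UA UD in auto)
qed

end
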